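(* Let $M,N\in\mathbb{N}$. For $n\geq 1$, the number $p_n(\mathbf M(M,N))$ of $n$-periodic points of the Motzkin shift is: if $n$ is even, $$2\Big\{(M+N+1)^n-\sum_{i=0}^{n/2}\binom{n}{2i}N^{2i}\sum_{j=0}^{n/2-i}\binom{n-2i}{j}M^j-\sum_{i=0}^{n/2-1}\binom{n}{2i+1}N^{2i+1}\sum_{j=0}^{n/2-i-1}\binom{n-2i-1}{j}M^j\Big\}+\sum_{i=0}^{n/2}\binom{n}{n-2i}\binom{2i}{i}M^iN^{n-2i};$$ if $n$ is odd, $$2\Big\{(M+N+1)^n-\sum_{i=0}^{n/2}\binom{n}{2i}N^{2i}\sum_{j=0}^{(n-1)/2-i}\binom{n-2i}{j}M^j-\sum_{i=0}^{(n-1)/2}\binom{n}{2i+1}N^{2i+1}\sum_{j=0}^{(n-1)/2-i}\binom{n-2i-1}{j}M^j\Big\}+\sum_{i=0}^{(n-1)/2}\binom{n}{n-2i}N^{n-2i}\binom{2i}{i}M^i.$$ Here all summation indices run over integers between the indicated bounds.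
   Context: Alphabet $\Sigma=\{\lambda_1,\dots,\lambda_M,\rho_1,\dots,\rho_M,1_1,\dots,1_N\}$. $\mathcal{M}(M,N)$ is the monoid with zero generated by $\Sigma$ and an identity $\mathbf{1}$, subject only to the relations $\lambda_i\rho_i=\mathbf{1}$, $\lambda_i\rho_j=0$ ($i\neq j$), each $1_i$ acts as the identity ($1_i\alpha=\alpha 1_i=\alpha$, $1_i1_j=\mathbf 1$), and $0$ is absorbing; no other relations. $\mathit{red}:\Sigma^*\to\mathcal{M}(M,N)$ sends a word to the product of its letters (empty word to $\mathbf 1$). The Motzkin shift is $\mathbf{M}(M,N)=\{x\in\Sigma^{\mathbb Z}:\mathit{red}(x_i\cdots x_j)\neq 0\ \forall i\le j\}$ with shift $\sigma$, and $p_n(\mathbf M(M,N))=\#\{x\in\mathbf M(M,N):\sigma^nx=x\}$. *)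

theory Defs
  imports Main
begin

datatype letter = Lam nat | Rho nat | One nat

definition Sigma :: "nat \<Rightarrow> nat \<Rightarrow> letter set" where
  "Sigma M N = {Lam i | i. 1 \<le> i \<and> i \<le> M} \<union> {Rho i | i. 1 \<le> i \<and> i \<le> M}
             \<union> {One i | i. 1 \<le> i \<and> i \<le> N}"

text \<open>The monoid with zero M(M,N) is presented as the quotient of the free monoid on the
  letters, with an adjoined absorbing zero (None), by the congruence generated by the
  defining relations.  Elements are represented by Some w (the class of the word w) or
  None (the zero).\<close>
inductive mstep :: "letter list option \<Rightarrow> letter list option \<Rightarrow> bool" where
  cancel: "mstep (Some (u @ [Lam i, Rho i] @ v)) (Some (u @ v))"
| kill:   "i \<noteq> j \<Longrightarrow> mstep (Some (u @ [Lam i, Rho j] @ v)) None"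
| unit:   "mstep (Some (u @ [One i] @ v)) (Some (u @ v))"

definition red_zero :: "letter list \<Rightarrow> bool" where
  "red_zero w \<longleftrightarrow> equivclp mstep (Some w) None"

definition motzkin_shift :: "nat \<Rightarrow> nat \<Rightarrow> (int \<Rightarrow> letter) set" where
  "motzkin_shift M N = {x. (\<forall>k. x k \<in> Sigma M N) \<and>
       (\<forall>i j. i \<le> j \<longrightarrow> \<not> red_zero (map x [i..j]))}"

definition periodic_points :: "nat \<Rightarrow> nat \<Rightarrow> nat \<Rightarrow> nat" where
  "periodic_points M N n = card {x \<in> motzkin_shift M N. \<forall>k. x (k + int n) = x k}"

end

theory Submission
  imports Defs
begin

fun stp :: "letter list option \<Rightarrow> letter \<Rightarrow> letter list option" where
  "stp None c = None"
| "stp (Some st) (One i) = Some st"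
| "stp (Some st) (Lam i) = Some (Lam i # st)"
| "stp (Some st) (Rho j) = (case st of Lam i # r \<Rightarrow> if i = j then Some r else None
                                 | _ \<Rightarrow> Some (Rho j # st))"

definition nf :: "letter list \<Rightarrow> letter list option" where
  "nf w = foldl stp (Some []) w"

fun G :: "letter list option \<Rightarrow> letter list option" where
  "G None = None" | "G (Some w) = nf w"

lemma foldl_None[simp]: "foldl stp None v = None"
  by (induction v) auto

lemma stp_LR[simp]: "stp (stp s (Lam i)) (Rho i) = s"
  by (cases s) auto

lemma stp_LR': "i \<noteq> j \<Longrightarrow> stp (stp s (Lam i)) (Rho j) = None"
  by (cases s) auto

lemma stp_One[simp]: "stp s (One i) = s"
  by (cases s) auto

lemma mstep_G: "mstep a b \<Longrightarrow> G a = G b"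
  by (induction rule: mstep.induct) (simp_all add: nf_def stp_LR')

lemma rtr_G: "mstep\<^sup>*\<^sup>* a b \<Longrightarrow> G a = G b"
  by (induction rule: rtranclp_induct) (auto dest: mstep_G)

lemma equiv_G: "equivclp mstep a b \<Longrightarrow> G a = G b"
  unfolding equivclp_def
  by (induction rule: rtranclp_induct) (auto simp: symclp_def dest: mstep_G)

fun ctx :: "letter list \<Rightarrow> letter list \<Rightarrow> letter list option \<Rightarrow> letter list option" where
  "ctx u z None = None" | "ctx u z (Some w) = Some (u @ w @ z)"

lemma mstep_ctx: "mstep a b \<Longrightarrow> mstep (ctx u z a) (ctx u z b)"
proof (induction rule: mstep.induct)
  case (cancel u' i v)
  then show ?case using mstep.cancel[of "u@u'" i "v@z"] by simp
next
  case (kill i j u' v)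
  then show ?case using mstep.kill[of i j "u@u'" "v@z"] by simp
next
  case (unit u' i v)
  then show ?case using mstep.unit[of "u@u'" i "v@z"] by simp
qed

lemma rtr_ctx: "mstep\<^sup>*\<^sup>* a b \<Longrightarrow> mstep\<^sup>*\<^sup>* (ctx u z a) (ctx u z b)"
  by (induction rule: rtranclp_induct) (auto intro: rtranclp.rtrancl_into_rtrancl mstep_ctx)

lemma nf_snoc: "nf (w @ [c]) = stp (nf w) c"
  by (simp add: nf_def)

lemma nf_path: "(nf w = None \<longrightarrow> mstep\<^sup>*\<^sup>* (Some w) None) \<and>
   (\<forall>st. nf w = Some st \<longrightarrow> mstep\<^sup>*\<^sup>* (Some w) (Some (rev st)))"
proof (induction w rule: rev_induct)
  case Nil
  then show ?case by (simp add: nf_def)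
next
  case (snoc c w)
  show ?case
  proof (cases "nf w")
    case None
    then have "mstep\<^sup>*\<^sup>* (Some w) None" using snoc by simp
    from rtr_ctx[OF this, of "[]" "[c]"] have "mstep\<^sup>*\<^sup>* (Some (w@[c])) None" by simp
    then show ?thesis using None by (simp add: nf_snoc)
  next
    case (Some st)
    then have "mstep\<^sup>*\<^sup>* (Some w) (Some (rev st))" using snoc by simp
    from rtr_ctx[OF this, of "[]" "[c]"] have P: "mstep\<^sup>*\<^sup>* (Some (w@[c])) (Some (rev st @ [c]))" by simp
    show ?thesis
    proof (cases c)
      case (Lam i)
      then show ?thesis using P Some by (simp add: nf_snoc)
    next
      case (One i)
      have Q: "mstep (Some (rev st @ [One i])) (Some (rev st))" using mstep.unit[of "rev st" i "[]"] by simp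
      from P One have P': "mstep\<^sup>*\<^sup>* (Some (w@[One i])) (Some (rev st @ [One i]))" by simp
      have R: "mstep\<^sup>*\<^sup>* (Some (w@[One i])) (Some (rev st))" by (rule rtranclp.rtrancl_into_rtrancl[OF P' Q])
      have "nf (w @ [One i]) = Some st" using Some by (simp add: nf_snoc)
      then show ?thesis using R One by simp
    next
      case (Rho j)
      show ?thesis
      proof (cases st)
        case Nil
        then show ?thesis using P Some Rho by (simp add: nf_snoc)
      next
        case (Cons a r)
        show ?thesis
        proof (cases a)
          case (Lam i)
          show ?thesis
          proof (cases "i = j")
            case True
            have "mstep (Some (rev r @ [Lam i, Rho i] @ [])) (Some (rev r @ []))" by (rule mstep.cancel)
            then show ?thesis using P Some Rho Cons Lam True by (simp add: nf_snoc)
          next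
            case False
            have "mstep (Some (rev r @ [Lam i, Rho j] @ [])) None" using False by (rule mstep.kill)
            then show ?thesis using P Some Rho Cons Lam False by (simp add: nf_snoc)
          qed
        qed (use P Some Rho Cons in \<open>simp_all add: nf_snoc\<close>)
      qed
    qed
  qed
qed

lemma red_zero_nf: "red_zero w \<longleftrightarrow> nf w = None"
proof
  assume "red_zero w"
  then have "G (Some w) = G None" unfolding red_zero_def by (rule equiv_G)
  then show "nf w = None" by simp
next
  assume "nf w = None"
  then have "mstep\<^sup>*\<^sup>* (Some w) None" using nf_path[of w] by simp
  then show "red_zero w" unfolding red_zero_def using rtranlcp_le_equivclp[of mstep] by (simp add: le_fun_def)
qed

lemma nf_factor: "nf (u @ v @ z) \<noteq> None \<Longrightarrow> nf v \<noteq> None"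
proof
  assume a: "nf (u @ v @ z) \<noteq> None" "nf v = None"
  then have "mstep\<^sup>*\<^sup>* (Some v) None" using nf_path[of v] by simp
  from rtr_ctx[OF this, of u z] have "mstep\<^sup>*\<^sup>* (Some (u@v@z)) None" by simp
  then have "G (Some (u@v@z)) = G None" by (rule rtr_G)
  then have "nf (u@v@z) = None" by simp
  then show False using a by simp
qed

definition pw :: "letter list \<Rightarrow> nat \<Rightarrow> letter list" where
  "pw w k = concat (replicate k w)"

definition valid :: "letter list \<Rightarrow> bool" where
  "valid w \<longleftrightarrow> (\<forall>k. nf (pw w k) \<noteq> None)"

lemma pw_Suc1: "pw (c # u) (Suc k) = [c] @ pw (u @ [c]) k @ u"
  by (induction k) (auto simp: pw_def)

lemma pw_Suc2: "pw (u @ [c]) (Suc k) = u @ pw (c # u) k @ [c]"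
  by (induction k) (auto simp: pw_def)

lemma valid_rotate1: "valid (rotate1 w) \<longleftrightarrow> valid w"
proof (cases w)
  case Nil
  then show ?thesis by simp
next
  case (Cons c u)
  have "valid (u @ [c]) \<longleftrightarrow> valid (c # u)"
  proof
    assume v: "valid (u @ [c])"
    show "valid (c # u)" unfolding valid_def
    proof
      fix k
      have "nf (pw (u @ [c]) (Suc k)) \<noteq> None" using v valid_def by blast
      then show "nf (pw (c # u) k) \<noteq> None" unfolding pw_Suc2 by (rule nf_factor)
    qed
  next
    assume v: "valid (c # u)"
    show "valid (u @ [c])" unfolding valid_def
    proof
      fix k
      have "nf (pw (c # u) (Suc k)) \<noteq> None" using v valid_def by blast
      then show "nf (pw (u @ [c]) k) \<noteq> None" unfolding pw_Suc1 by (rule nf_factor)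
    qed
  qed
  then show ?thesis using Cons by simp
qed

lemma valid_rotate: "valid (rotate m w) \<longleftrightarrow> valid w"
  by (induction m) (auto simp: valid_rotate1)

fun isOne :: "letter \<Rightarrow> bool" where
  "isOne (One i) = True" | "isOne _ = False"

lemma foldl_filter: "foldl stp s (filter (\<lambda>c. \<not> isOne c) w) = foldl stp s w"
  by (induction w arbitrary: s) (auto elim: isOne.elims)

lemma filter_pw: "filter P (pw w k) = pw (filter P w) k"
  by (induction k) (auto simp: pw_def)

lemma valid_One: "valid (One i # w) \<longleftrightarrow> valid w"
proof -
  have "nf (pw (One i # w) k) = nf (pw w k)" for k
    using foldl_filter[of "Some []" "pw (One i # w) k"] foldl_filter[of "Some []" "pw w k"]
    by (simp add: nf_def filter_pw)
  then show ?thesis by (simp add: valid_def)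
qed

lemma foldl_pw_LR: "foldl stp s (pw (Lam i # Rho i # w) k) = foldl stp s (pw w k)"
  by (induction k arbitrary: s) (auto simp: pw_def)

lemma valid_LR: "valid (Lam i # Rho j # w) \<longleftrightarrow> i = j \<and> valid w"
proof (cases "i = j")
  case True
  then show ?thesis by (simp add: valid_def nf_def foldl_pw_LR)
next
  case False
  have "nf (pw (Lam i # Rho j # w) 1) = None" using False by (simp add: pw_def nf_def stp_LR')
  then show ?thesis using False by (auto simp: valid_def)
qed

fun isRho :: "letter \<Rightarrow> bool" where
  "isRho (Rho i) = True" | "isRho _ = False"
fun isLam :: "letter \<Rightarrow> bool" where
  "isLam (Lam i) = True" | "isLam _ = False"

lemma foldl_noR: "\<forall>c\<in>set v. \<not> isRho c \<Longrightarrow> foldl stp (Some st) v \<noteq> None"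
proof (induction v arbitrary: st)
  case (Cons c v)
  then show ?case by (cases c) auto
qed simp

lemma foldl_noL: "\<forall>c\<in>set v. \<not> isLam c \<Longrightarrow> \<forall>c\<in>set st. \<not> isLam c \<Longrightarrow> foldl stp (Some st) v \<noteq> None"
proof (induction v arbitrary: st)
  case (Cons c v)
  show ?case
  proof (cases c)
    case (Rho j)
    have "stp (Some st) (Rho j) = Some (Rho j # st)"
      using Cons.prems(2) by (cases st) (auto elim: isLam.elims)
    then show ?thesis using Cons Rho by auto
  qed (use Cons in auto)
qed simp

lemma set_pw: "set (pw w k) \<subseteq> set w"
  by (auto simp: pw_def)

lemma valid_noR: "\<forall>c\<in>set w. \<not> isRho c \<Longrightarrow> valid w"
  unfolding valid_def nf_def using set_pw by (metis foldl_noR subsetD)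

lemma valid_noL: "\<forall>c\<in>set w. \<not> isLam c \<Longrightarrow> valid w"
  unfolding valid_def nf_def using set_pw foldl_noL
  by (metis empty_iff empty_set subsetD)

datatype knd = KL | KR | KO

fun kind :: "letter \<Rightarrow> knd" where
  "kind (Lam i) = KL" | "kind (Rho i) = KR" | "kind (One i) = KO"

definition V :: "nat \<Rightarrow> nat \<Rightarrow> knd list \<Rightarrow> letter list set" where
  "V M N p = {w. map kind w = p \<and> set w \<subseteq> Sigma M N \<and> valid w}"

definition cnt :: "knd \<Rightarrow> knd list \<Rightarrow> nat" where
  "cnt x p = length (filter ((=) x) p)"

definition wt :: "nat \<Rightarrow> nat \<Rightarrow> knd list \<Rightarrow> nat" where
  "wt M N p = M ^ max (cnt KL p) (cnt KR p) * N ^ cnt KO p"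

lemma cnt_rotate1: "cnt x (rotate1 p) = cnt x p"
  by (cases p) (auto simp: cnt_def)

lemma cnt_rotate: "cnt x (rotate m p) = cnt x p"
  by (induction m) (auto simp: cnt_rotate1)

lemma wt_rotate: "wt M N (rotate m p) = wt M N p"
  by (simp add: wt_def cnt_rotate)

definition rotr :: "'a list \<Rightarrow> 'a list" where
  "rotr xs = (if xs = [] then [] else last xs # butlast xs)"

lemma rotr1: "rotr (rotate1 xs) = xs"
  by (cases xs) (auto simp: rotr_def)

lemma rotr2: "rotate1 (rotr xs) = xs"
  by (cases xs rule: rev_exhaust) (auto simp: rotr_def)

lemma V_rotate1: "bij_betw rotate1 (V M N p) (V M N (rotate1 p))"
proof (rule bij_betw_byWitness[where f' = rotr])
  show "\<forall>a\<in>V M N p. rotr (rotate1 a) = a" by (simp add: rotr1)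
  show "\<forall>a'\<in>V M N (rotate1 p). rotate1 (rotr a') = a'" by (simp add: rotr2)
  show "rotate1 ` V M N p \<subseteq> V M N (rotate1 p)"
    by (auto simp: V_def valid_rotate1 simp flip: rotate1_map)
  show "rotr ` V M N (rotate1 p) \<subseteq> V M N p"
  proof
    fix w assume "w \<in> rotr ` V M N (rotate1 p)"
    then obtain u where u: "u \<in> V M N (rotate1 p)" "w = rotr u" by auto
    then have "rotate1 w = u" by (simp add: rotr2)
    then show "w \<in> V M N p" using u(1)
      by (auto simp: V_def valid_rotate1 simp flip: rotate1_map
          dest: arg_cong[where f = rotr] simp: rotr1)
  qed
qed

lemma card_V_rotate: "card (V M N (rotate m p)) = card (V M N p)"
proof (induction m)
  case (Suc m)
  then show ?case using bij_betw_same_card[OF V_rotate1[of M N "rotate m p"]] by simp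
qed simp

lemma V_O: "V M N (KO # p) = (\<lambda>(i,w). One i # w) ` ({1..N} \<times> V M N p)"
proof (rule set_eqI, rule iffI)
  fix w assume "w \<in> V M N (KO # p)"
  then obtain c u where w: "w = c # u" "kind c = KO" "map kind u = p" "c \<in> Sigma M N"
      "set u \<subseteq> Sigma M N" "valid w" by (auto simp: V_def)
  then obtain i where c: "c = One i" by (cases c) auto
  then have "i \<in> {1..N}" using w(4) by (auto simp: Sigma_def)
  moreover have "u \<in> V M N p" using w c valid_One by (auto simp: V_def)
  ultimately show "w \<in> (\<lambda>(i,w). One i # w) ` ({1..N} \<times> V M N p)" using w c by auto
next
  fix w assume "w \<in> (\<lambda>(i,w). One i # w) ` ({1..N} \<times> V M N p)"
  then obtain i u where iu: "w = One i # u" "i \<in> {1..N}" "u \<in> V M N p" by auto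
  have "One i \<in> Sigma M N" using iu(2) by (auto simp: Sigma_def)
  then show "w \<in> V M N (KO # p)" using iu by (auto simp: V_def valid_One)
qed

lemma card_V_O: "card (V M N (KO # p)) = N * card (V M N p)"
proof -
  have "inj_on (\<lambda>(i,w). One i # w) ({1..N} \<times> V M N p)" by (auto simp: inj_on_def)
  then show ?thesis by (simp add: V_O card_image card_cartesian_product)
qed

lemma V_LR: "V M N (KL # KR # p) = (\<lambda>(i,w). Lam i # Rho i # w) ` ({1..M} \<times> V M N p)"
proof (rule set_eqI, rule iffI)
  fix w assume "w \<in> V M N (KL # KR # p)"
  then obtain c d u where w: "w = c # d # u" "kind c = KL" "kind d = KR" "map kind u = p" "c \<in> Sigma M N"
      "set u \<subseteq> Sigma M N" "valid w" by (auto simp: V_def)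
  then obtain i j where c: "c = Lam i" "d = Rho j" by (cases c; cases d) auto
  then have "i \<in> {1..M}" using w(5) by (auto simp: Sigma_def)
  moreover have "u \<in> V M N p" "i = j" using w c valid_LR by (auto simp: V_def)
  ultimately show "w \<in> (\<lambda>(i,w). Lam i # Rho i # w) ` ({1..M} \<times> V M N p)" using w c by auto
next
  fix w assume "w \<in> (\<lambda>(i,w). Lam i # Rho i # w) ` ({1..M} \<times> V M N p)"
  then obtain i u where iu: "w = Lam i # Rho i # u" "i \<in> {1..M}" "u \<in> V M N p" by auto
  have "Lam i \<in> Sigma M N" "Rho i \<in> Sigma M N" using iu(2) by (auto simp: Sigma_def)
  then show "w \<in> V M N (KL # KR # p)" using iu by (auto simp: V_def valid_LR)
qed

lemma card_V_LR: "card (V M N (KL # KR # p)) = M * card (V M N p)"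
proof -
  have "inj_on (\<lambda>(i,w). Lam i # Rho i # w) ({1..M} \<times> V M N p)" by (auto simp: inj_on_def)
  then show ?thesis by (simp add: V_LR card_image card_cartesian_product)
qed

lemma V_allL: "V M N (replicate n KL) = map Lam ` {xs. set xs \<subseteq> {1..M} \<and> length xs = n}"
proof (rule set_eqI, rule iffI)
  fix w assume w: "w \<in> V M N (replicate n KL)"
  then have mk: "map kind w = replicate n KL" "set w \<subseteq> Sigma M N" by (auto simp: V_def)
  have k: "\<forall>c\<in>set w. kind c = KL" "length w = n" "set w \<subseteq> Sigma M N"
  proof -
    show "\<forall>c\<in>set w. kind c = KL"
    proof
      fix c assume "c \<in> set w"
      then have "kind c \<in> set (map kind w)" by simp
      then show "kind c = KL" using mk(1) by (simp split: if_splits)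
    qed
    show "length w = n" using arg_cong[OF mk(1), of length] by simp
    show "set w \<subseteq> Sigma M N" by (rule mk(2))
  qed
  have "\<forall>c\<in>set w. \<exists>i. c = Lam i \<and> i \<in> {1..M}"
  proof
    fix c assume "c \<in> set w"
    then have "c \<in> Sigma M N" "kind c = KL" using k by auto
    then show "\<exists>i. c = Lam i \<and> i \<in> {1..M}" by (cases c) (auto simp: Sigma_def)
  qed
  then have "w = map Lam (map (\<lambda>c. case c of Lam i \<Rightarrow> i | _ \<Rightarrow> 0) w)"
    by (induction w) auto
  moreover have "set (map (\<lambda>c. case c of Lam i \<Rightarrow> i | _ \<Rightarrow> 0) w) \<subseteq> {1..M}"
    using \<open>\<forall>c\<in>set w. \<exists>i. c = Lam i \<and> i \<in> {1..M}\<close> by auto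
  ultimately show "w \<in> map Lam ` {xs. set xs \<subseteq> {1..M} \<and> length xs = n}"
    using k(2) by (metis (mono_tags, lifting) image_eqI length_map mem_Collect_eq)
next
  fix w assume "w \<in> map Lam ` {xs. set xs \<subseteq> {1..M} \<and> length xs = n}"
  then obtain xs where xs: "w = map Lam xs" "set xs \<subseteq> {1..M}" "length xs = n" by auto
  have "valid w" by (rule valid_noR) (auto simp: xs)
  moreover have "map kind w = replicate n KL" using xs by (simp add: map_replicate_const comp_def)
  ultimately show "w \<in> V M N (replicate n KL)" using xs by (auto simp: V_def Sigma_def)
qed

lemma card_V_allL: "card (V M N (replicate n KL)) = M ^ n"
proof -
  have "inj (map Lam)" by (simp add: inj_on_def)
  then have "card (map Lam ` {xs. set xs \<subseteq> {1..M} \<and> length xs = n}) = card {xs. set xs \<subseteq> {1..M} \<and> length xs = n}"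
    by (meson card_image inj_on_subset subset_UNIV)
  then show ?thesis unfolding V_allL by (simp add: card_lists_length_eq)
qed

lemma V_allR: "V M N (replicate n KR) = map Rho ` {xs. set xs \<subseteq> {1..M} \<and> length xs = n}"
proof (rule set_eqI, rule iffI)
  fix w assume w: "w \<in> V M N (replicate n KR)"
  then have mk: "map kind w = replicate n KR" "set w \<subseteq> Sigma M N" by (auto simp: V_def)
  have k: "\<forall>c\<in>set w. kind c = KR" "length w = n" "set w \<subseteq> Sigma M N"
  proof -
    show "\<forall>c\<in>set w. kind c = KR"
    proof
      fix c assume "c \<in> set w"
      then have "kind c \<in> set (map kind w)" by simp
      then show "kind c = KR" using mk(1) by (simp split: if_splits)
    qed
    show "length w = n" using arg_cong[OF mk(1), of length] by simp
    show "set w \<subseteq> Sigma M N" by (rule mk(2))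
  qed
  have "\<forall>c\<in>set w. \<exists>i. c = Rho i \<and> i \<in> {1..M}"
  proof
    fix c assume "c \<in> set w"
    then have "c \<in> Sigma M N" "kind c = KR" using k by auto
    then show "\<exists>i. c = Rho i \<and> i \<in> {1..M}" by (cases c) (auto simp: Sigma_def)
  qed
  then have "w = map Rho (map (\<lambda>c. case c of Rho i \<Rightarrow> i | _ \<Rightarrow> 0) w)"
    by (induction w) auto
  moreover have "set (map (\<lambda>c. case c of Rho i \<Rightarrow> i | _ \<Rightarrow> 0) w) \<subseteq> {1..M}"
    using \<open>\<forall>c\<in>set w. \<exists>i. c = Rho i \<and> i \<in> {1..M}\<close> by auto
  ultimately show "w \<in> map Rho ` {xs. set xs \<subseteq> {1..M} \<and> length xs = n}"
    using k(2) by (metis (mono_tags, lifting) image_eqI length_map mem_Collect_eq)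
next
  fix w assume "w \<in> map Rho ` {xs. set xs \<subseteq> {1..M} \<and> length xs = n}"
  then obtain xs where xs: "w = map Rho xs" "set xs \<subseteq> {1..M}" "length xs = n" by auto
  have "valid w" by (rule valid_noL) (auto simp: xs)
  moreover have "map kind w = replicate n KR" using xs by (simp add: map_replicate_const comp_def)
  ultimately show "w \<in> V M N (replicate n KR)" using xs by (auto simp: V_def Sigma_def)
qed

lemma card_V_allR: "card (V M N (replicate n KR)) = M ^ n"
proof -
  have "inj (map Rho)" by (simp add: inj_on_def)
  then have "card (map Rho ` {xs. set xs \<subseteq> {1..M} \<and> length xs = n}) = card {xs. set xs \<subseteq> {1..M} \<and> length xs = n}"
    by (meson card_image inj_on_subset subset_UNIV)
  then show ?thesis unfolding V_allR by (simp add: card_lists_length_eq)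
qed

lemma two_cons: "length q \<ge> 2 \<Longrightarrow> q = q!0 # q!1 # drop 2 q"
  by (cases q; cases "tl q") auto

lemma pattern_cases:
  "(\<exists>m p'. rotate m p = KO # p' \<and> length p' < length p) \<or>
   (\<exists>m p'. rotate m p = KL # KR # p' \<and> length p' < length p) \<or>
   p = replicate (length p) KL \<or> p = replicate (length p) KR"
proof -
  define n where "n = length p"
  show ?thesis
  proof (cases "KO \<in> set p")
    case True
    then obtain k where k: "k < n" "p ! k = KO" by (auto simp: in_set_conv_nth n_def)
    have "rotate k p = drop k p @ take k p" using k by (simp add: rotate_drop_take n_def)
    also have "\<dots> = KO # (drop (Suc k) p @ take k p)" using k Cons_nth_drop_Suc[of k p] by (simp add: n_def)
    finally have "rotate k p = KO # (drop (Suc k) p @ take k p)" .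
    moreover have "length (drop (Suc k) p @ take k p) < length p" using k by (simp add: n_def)
    ultimately show ?thesis by blast
  next
    case noO: False
    show ?thesis
    proof (cases "KL \<in> set p \<and> KR \<in> set p")
      case True
      then obtain k0 kr where k0: "k0 < n" "p ! k0 = KL" and kr: "kr < n" "p ! kr = KR"
        by (auto simp: in_set_conv_nth n_def)
      have "\<exists>k<n. p ! k = KL \<and> p ! (Suc k mod n) = KR"
      proof (rule ccontr)
        assume H: "\<not> (\<exists>k<n. p ! k = KL \<and> p ! (Suc k mod n) = KR)"
        have all: "p ! ((k0 + t) mod n) = KL" for t
        proof (induction t)
          case 0
          then show ?case using k0 by simp
        next
          case (Suc t)
          define j where "j = (k0 + t) mod n"
          have j: "j < n" using k0 by (simp add: j_def)
          have "Suc j mod n < n" using k0 by simp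
          then have inset: "p ! (Suc j mod n) \<in> set p" by (simp add: n_def)
          have "p ! (Suc j mod n) \<noteq> KR" using H j Suc by (auto simp: j_def)
          moreover have "p ! (Suc j mod n) \<noteq> KO" using inset noO by auto
          ultimately have "p ! (Suc j mod n) = KL" by (cases "p ! (Suc j mod n)") auto
          moreover have "Suc j mod n = (k0 + Suc t) mod n" by (simp add: j_def mod_Suc_eq)
          ultimately show ?case by simp
        qed
        have "(k0 + (n - k0 + kr)) mod n = kr" using k0 kr by simp
        then have "p ! kr = KL" using all[of "n - k0 + kr"] by simp
        then show False using kr by simp
      qed
      then obtain k where k: "k < n" "p ! k = KL" "p ! (Suc k mod n) = KR" by blast
      have n2: "n \<ge> 2"
      proof (rule ccontr)
        assume "\<not> n \<ge> 2"
        then have "n = 1" using k by linarith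
        then show False using k by simp
      qed
      define q where "q = rotate k p"
      have lq: "length q = n" by (simp add: q_def n_def)
      have "0 < length p" using n2 unfolding n_def by linarith
      then have "q ! 0 = p ! ((k + 0) mod length p)" unfolding q_def by (rule nth_rotate)
      then have "q ! 0 = KL" using k by (simp add: n_def)
      moreover have "q ! 1 = KR" using k n2 nth_rotate[of 1 p k] by (simp add: q_def n_def)
      ultimately have "q = KL # KR # drop 2 q" using two_cons[of q] lq n2 by simp
      moreover have "length (drop 2 q) < length p" using lq n2 by (simp add: n_def)
      ultimately show ?thesis unfolding q_def by blast
    next
      case False
      then have "(\<forall>y\<in>set p. y = KL) \<or> (\<forall>y\<in>set p. y = KR)"
        using noO by (metis knd.exhaust)
      then show ?thesis by (metis replicate_length_same)
    qed
  qed
qed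

lemma card_V: "card (V M N p) = wt M N p"
proof (induction "length p" arbitrary: p rule: less_induct)
  case less
  consider (O) m p' where "rotate m p = KO # p'" "length p' < length p"
    | (LR) m p' where "rotate m p = KL # KR # p'" "length p' < length p"
    | (L) "p = replicate (length p) KL" | (R) "p = replicate (length p) KR"
    using pattern_cases[of p] by blast
  then show ?case
  proof cases
    case O
    have "card (V M N p) = card (V M N (rotate m p))" by (simp add: card_V_rotate)
    also have "\<dots> = N * wt M N p'" using O less by (simp add: card_V_O)
    also have "\<dots> = wt M N (rotate m p)" using O by (simp add: wt_def cnt_def)
    also have "\<dots> = wt M N p" by (simp add: wt_rotate)
    finally show ?thesis .
  next
    case LR
    have "card (V M N p) = card (V M N (rotate m p))" by (simp add: card_V_rotate)
    also have "\<dots> = M * wt M N p'" using LR less by (simp add: card_V_LR)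
    also have "\<dots> = wt M N (rotate m p)" using LR by (simp add: wt_def cnt_def)
    also have "\<dots> = wt M N p" by (simp add: wt_rotate)
    finally show ?thesis .
  next
    case L
    have "wt M N p = M ^ length p" by (subst L) (simp add: wt_def cnt_def)
    then show ?thesis using card_V_allL[of M N "length p"] L by simp
  next
    case R
    have "wt M N p = M ^ length p" by (subst R) (simp add: wt_def cnt_def)
    then show ?thesis using card_V_allR[of M N "length p"] R by simp
  qed
qed

lemma length_pw[simp]: "length (pw w K) = K * length w"
  by (induction K) (auto simp: pw_def)

lemma nth_pw: "length w = n \<Longrightarrow> s < K * n \<Longrightarrow> pw w K ! s = w ! (s mod n)"
proof (induction K arbitrary: s)
  case 0
  then show ?case by simp
next
  case (Suc K)
  have e: "pw w (Suc K) = w @ pw w K" by (simp add: pw_def)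
  show ?case
  proof (cases "s < n")
    case True
    then show ?thesis using Suc.prems by (simp add: e nth_append)
  next
    case False
    then have "s - n < K * n" using Suc.prems by auto
    then have "pw w K ! (s - n) = w ! ((s - n) mod n)" using Suc by simp
    moreover have "(s - n) mod n = s mod n" using False by (simp add: le_mod_geq)
    ultimately show ?thesis using Suc.prems False by (simp add: e nth_append)
  qed
qed

definition periodic :: "nat \<Rightarrow> (int \<Rightarrow> letter) \<Rightarrow> bool" where
  "periodic n x \<longleftrightarrow> (\<forall>k. x (k + int n) = x k)"

lemma periodic_mult: "periodic n x \<Longrightarrow> x (r + int n * int t) = x r"
proof (induction t)
  case (Suc t)
  have "x (r + int n * int (Suc t)) = x ((r + int n * int t) + int n)" by (simp add: algebra_simps)
  also have "\<dots> = x (r + int n * int t)" using Suc.prems by (simp add: periodic_def)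
  finally show ?case using Suc by simp
qed simp

lemma periodic_mod: assumes "periodic n x" "n \<ge> 1" shows "x k = x (k mod int n)"
proof -
  define q r where "q = k div int n" and "r = k mod int n"
  have k: "k = r + int n * q" by (simp add: q_def r_def)
  show ?thesis
  proof (cases "q \<ge> 0")
    case True
    then have "k = r + int n * int (nat q)" using k by simp
    then show ?thesis using periodic_mult[OF assms(1), of r "nat q"] by (simp add: r_def)
  next
    case False
    then have "r = k + int n * int (nat (- q))" using k by simp
    then show ?thesis using periodic_mult[OF assms(1), of k "nat (-q)"] by (simp add: r_def)
  qed
qed

definition phi :: "nat \<Rightarrow> (int \<Rightarrow> letter) \<Rightarrow> letter list" where
  "phi n x = map (\<lambda>i. x (int i)) [0..<n]"

lemma phi_nth: "periodic n x \<Longrightarrow> n \<ge> 1 \<Longrightarrow> x k = phi n x ! nat (k mod int n)"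
proof -
  assume a: "periodic n x" "n \<ge> 1"
  have "nat (k mod int n) < n" using a(2)
    by (metis Euclidean_Rings.pos_mod_bound Euclidean_Rings.pos_mod_sign int_ops(1) less_le_trans
        nat_less_iff of_nat_less_iff zero_less_one)
  then show ?thesis using periodic_mod[OF a] by (simp add: phi_def)
qed

lemma factor_exists:
  assumes per: "periodic n x" and n: "n \<ge> 1" and ij: "i \<le> j"
  shows "\<exists>u z K. pw (phi n x) K = u @ map x [i..j] @ z"
proof -
  define w where "w = phi n x"
  have lw: "length w = n" by (simp add: w_def phi_def)
  define r where "r = nat (i mod int n)"
  define L where "L = nat (j - i + 1)"
  define K where "K = (r + L) div n + 1"
  have rL: "r + L \<le> K * n"
  proof -
    have m: "(r + L) mod n < n" using n by simp
    have d: "(r + L) div n * n + (r + L) mod n = r + L" by (rule div_mult_mod_eq)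
    have "((r + L) div n + 1) * n = (r + L) div n * n + n" by (simp add: algebra_simps)
    then have "r + L < ((r + L) div n + 1) * n" using m d by linarith
    then show ?thesis by (simp add: K_def)
  qed
  have rmod: "int r = i mod int n" using n by (simp add: r_def)
  have eq: "take L (drop r (pw w K)) = map x [i..j]"
  proof (rule nth_equalityI)
    show "length (take L (drop r (pw w K))) = length (map x [i..j])" using rL lw by (simp add: L_def)
    fix t assume "t < length (take L (drop r (pw w K)))"
    then have t: "t < L" "r + t < K * n" using rL lw by auto
    have "take L (drop r (pw w K)) ! t = pw w K ! (r + t)" using t lw by (simp add: nth_drop)
    also have "\<dots> = w ! ((r + t) mod n)" using t lw by (simp add: nth_pw)
    also have "\<dots> = x (int ((r + t) mod n))" using n by (simp add: w_def phi_def)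
    also have "int ((r + t) mod n) = (i + int t) mod int n"
      using rmod by (simp add: zmod_int mod_add_left_eq)
    also have "x ((i + int t) mod int n) = x (i + int t)" using periodic_mod[OF per n] by simp
    also have "\<dots> = map x [i..j] ! t" using t by (simp add: L_def)
    finally show "take L (drop r (pw w K)) ! t = map x [i..j] ! t" .
  qed
  have "pw w K = take r (pw w K) @ take L (drop r (pw w K)) @ drop L (drop r (pw w K))"
    by (simp only: append_take_drop_id)
  then show ?thesis using eq w_def by metis
qed

lemma pw_as_map:
  assumes per: "periodic n x" and n: "n \<ge> 1" and K: "K \<ge> 1"
  shows "pw (phi n x) K = map x [0..int (K * n) - 1]"
proof (rule nth_equalityI)
  show "length (pw (phi n x) K) = length (map x [0..int (K * n) - 1])" by (simp add: phi_def nat_times_as_int)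
  fix s assume "s < length (pw (phi n x) K)"
  then have s: "s < K * n" by (simp add: phi_def)
  have "pw (phi n x) K ! s = phi n x ! (s mod n)" using s by (simp add: nth_pw phi_def)
  also have "\<dots> = x (int (s mod n))" using n by (simp add: phi_def)
  also have "\<dots> = x (int s)" using periodic_mod[OF per n, of "int s"] by (simp add: zmod_int)
  also have "\<dots> = map x [0..int (K * n) - 1] ! s"
  proof -
    have l: "s < length [0..int (K * n) - 1]" using s by (simp flip: of_nat_mult)
    have "map x [0..int (K*n) - 1] ! s = x ([0..int (K*n) - 1] ! s)" using l by (rule nth_map)
    also have "[0..int (K*n) - 1] ! s = int s" using s by (subst nth_upto) (auto simp flip: of_nat_mult)
    finally show ?thesis by simp
  qed
  finally show "pw (phi n x) K ! s = map x [0..int (K * n) - 1] ! s" .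
qed

lemma nonzero_iff_valid:
  assumes per: "periodic n x" and n: "n \<ge> 1"
  shows "(\<forall>i j. i \<le> j \<longrightarrow> \<not> red_zero (map x [i..j])) \<longleftrightarrow> valid (phi n x)"
proof
  assume H: "\<forall>i j. i \<le> j \<longrightarrow> \<not> red_zero (map x [i..j])"
  show "valid (phi n x)" unfolding valid_def
  proof
    fix K
    show "nf (pw (phi n x) K) \<noteq> None"
    proof (cases "K = 0")
      case True
      then show ?thesis by (simp add: pw_def nf_def)
    next
      case False
      then have "pw (phi n x) K = map x [0..int (K * n) - 1]" using pw_as_map[OF per n] by simp
      moreover have "(0::int) \<le> int (K * n) - 1" using False n by simp
      ultimately show ?thesis using H red_zero_nf by metis
    qed
  qed
next
  assume v: "valid (phi n x)"
  show "\<forall>i j. i \<le> j \<longrightarrow> \<not> red_zero (map x [i..j])"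
  proof (intro allI impI)
    fix i j :: int assume "i \<le> j"
    then obtain u z K where e: "pw (phi n x) K = u @ map x [i..j] @ z"
      using factor_exists[OF per n] by blast
    have "nf (u @ map x [i..j] @ z) \<noteq> None" using v e by (metis valid_def)
    then show "\<not> red_zero (map x [i..j])" using nf_factor red_zero_nf by blast
  qed
qed

definition Wn :: "nat \<Rightarrow> nat \<Rightarrow> nat \<Rightarrow> letter list set" where
  "Wn M N n = {w. length w = n \<and> set w \<subseteq> Sigma M N \<and> valid w}"

lemma Sigma_phi:
  assumes per: "periodic n x" and n: "n \<ge> 1"
  shows "(\<forall>k. x k \<in> Sigma M N) \<longleftrightarrow> set (phi n x) \<subseteq> Sigma M N"
proof
  assume "\<forall>k. x k \<in> Sigma M N" then show "set (phi n x) \<subseteq> Sigma M N" by (auto simp: phi_def)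
next
  assume a: "set (phi n x) \<subseteq> Sigma M N"
  show "\<forall>k. x k \<in> Sigma M N"
  proof
    fix k
    have "nat (k mod int n) < n" using n
      by (simp add: nat_less_iff)
    then have m: "phi n x ! nat (k mod int n) \<in> set (phi n x)" by (intro nth_mem) (simp add: phi_def)
    have "x k = phi n x ! nat (k mod int n)" by (rule phi_nth[OF per n])
    then show "x k \<in> Sigma M N" using a m by (metis subsetD)
  qed
qed

lemma card_periodic:
  assumes n: "n \<ge> 1"
  shows "periodic_points M N n = card (Wn M N n)"
proof -
  define P where "P = {x \<in> motzkin_shift M N. \<forall>k. x (k + int n) = x k}"
  have "bij_betw (phi n) P (Wn M N n)"
  proof (rule bij_betw_imageI)
    show "inj_on (phi n) P"
    proof (rule inj_onI)
      fix x y assume xy: "x \<in> P" "y \<in> P" "phi n x = phi n y"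
      have px: "periodic n x" "periodic n y" using xy by (auto simp: P_def periodic_def)
      show "x = y"
      proof
        fix k show "x k = y k" using phi_nth[OF px(1) n] phi_nth[OF px(2) n] xy(3) by metis
      qed
    qed
    show "phi n ` P = Wn M N n"
    proof (rule set_eqI, rule iffI)
      fix w assume "w \<in> phi n ` P"
      then obtain x where x: "x \<in> P" "w = phi n x" by auto
      have per: "periodic n x" using x by (auto simp: P_def periodic_def)
      show "w \<in> Wn M N n" using x Sigma_phi[OF per n] nonzero_iff_valid[OF per n]
        by (auto simp: P_def motzkin_shift_def Wn_def phi_def)
    next
      fix w assume w: "w \<in> Wn M N n"
      define x where "x = (\<lambda>k. w ! nat (k mod int n))"
      have per: "periodic n x" by (simp add: periodic_def x_def)
      have "phi n x = w"
      proof (rule nth_equalityI)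
        show "length (phi n x) = length w" using w by (simp add: phi_def Wn_def)
        fix i assume "i < length (phi n x)"
        then have "i < n" by (simp add: phi_def)
        then show "phi n x ! i = w ! i" by (simp add: phi_def x_def zmod_int)
      qed
      then have "x \<in> P" using w Sigma_phi[OF per n] nonzero_iff_valid[OF per n]
        by (auto simp: P_def motzkin_shift_def Wn_def periodic_def x_def)
      then show "w \<in> phi n ` P" using \<open>phi n x = w\<close> by blast
    qed
  qed
  then have "card P = card (Wn M N n)" by (rule bij_betw_same_card)
  then show ?thesis by (simp add: periodic_points_def P_def)
qed

definition Pats :: "nat \<Rightarrow> knd list set" where
  "Pats n = {p. set p \<subseteq> {KL, KR, KO} \<and> length p = n}"

lemma finite_Pats: "finite (Pats n)"
  unfolding Pats_def by (rule finite_lists_length_eq) simp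

lemma finite_Sigma: "finite (Sigma M N)"
proof -
  have "Sigma M N = Lam ` {1..M} \<union> Rho ` {1..M} \<union> One ` {1..N}" by (auto simp: Sigma_def)
  then show ?thesis by simp
qed

lemma finite_V: "finite (V M N p)"
proof (rule finite_subset)
  show "V M N p \<subseteq> {w. set w \<subseteq> Sigma M N \<and> length w = length p}"
    by (auto simp: V_def dest: arg_cong[where f=length])
  show "finite {w. set w \<subseteq> Sigma M N \<and> length w = length p}"
    by (rule finite_lists_length_eq[OF finite_Sigma])
qed

lemma knd_in: "x \<in> {KL, KR, KO}" by (cases x) auto

lemma Wn_UN: "Wn M N n = (\<Union>p\<in>Pats n. V M N p)"
proof (rule set_eqI, rule iffI)
  fix w assume "w \<in> Wn M N n"
  moreover have "set (map kind w) \<subseteq> {KL, KR, KO}" using knd_in by blast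
  ultimately have "w \<in> V M N (map kind w)" "map kind w \<in> Pats n"
    by (auto simp: Wn_def V_def Pats_def)
  then show "w \<in> (\<Union>p\<in>Pats n. V M N p)" by blast
next
  fix w assume "w \<in> (\<Union>p\<in>Pats n. V M N p)"
  then obtain p where "p \<in> Pats n" "w \<in> V M N p" by blast
  then show "w \<in> Wn M N n" by (auto simp: Wn_def V_def Pats_def dest: arg_cong[where f=length])
qed

lemma card_Wn: "card (Wn M N n) = (\<Sum>p\<in>Pats n. wt M N p)"
proof -
  have "card (\<Union>p\<in>Pats n. V M N p) = (\<Sum>p\<in>Pats n. card (V M N p))"
    apply (rule card_UN_disjoint[OF finite_Pats])
     apply (simp add: finite_V)
    apply (auto simp: V_def)
    done
  then show ?thesis by (simp add: Wn_UN card_V)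
qed

lemma Pats_Suc: "Pats (Suc n) = (\<lambda>p. KL # p) ` Pats n \<union> (\<lambda>p. KR # p) ` Pats n \<union> (\<lambda>p. KO # p) ` Pats n"
proof (rule set_eqI, rule iffI)
  fix p assume "p \<in> Pats (Suc n)"
  then obtain x q where p: "p = x # q" "q \<in> Pats n" "x \<in> {KL, KR, KO}"
    by (cases p) (auto simp: Pats_def)
  then show "p \<in> (\<lambda>p. KL # p) ` Pats n \<union> (\<lambda>p. KR # p) ` Pats n \<union> (\<lambda>p. KO # p) ` Pats n"
    by auto
qed (auto simp: Pats_def)

lemma sum_Pats_Suc:
  "(\<Sum>p\<in>Pats (Suc n). f p) = (\<Sum>p\<in>Pats n. f (KL # p)) + (\<Sum>p\<in>Pats n. f (KR # p)) + (\<Sum>p\<in>Pats n. f (KO # p))"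
proof -
  have fin: "finite ((\<lambda>p. x # p) ` Pats n)" for x using finite_Pats by simp
  have inj: "inj_on (\<lambda>p. x # p) A" for x :: knd and A by (simp add: inj_on_def)
  have "(\<Sum>p\<in>Pats (Suc n). f p) = sum f ((\<lambda>p. KL # p) ` Pats n) + sum f ((\<lambda>p. KR # p) ` Pats n)
      + sum f ((\<lambda>p. KO # p) ` Pats n)"
    unfolding Pats_Suc
    by (subst sum.union_disjoint; (auto simp: fin)?; subst sum.union_disjoint; auto simp: fin)
  also have "\<dots> = (\<Sum>p\<in>Pats n. f (KL # p)) + (\<Sum>p\<in>Pats n. f (KR # p)) + (\<Sum>p\<in>Pats n. f (KO # p))"
    by (simp add: sum.reindex[OF inj])
  finally show ?thesis .
qed

lemma Pats_0: "Pats 0 = {[]}" by (auto simp: Pats_def)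

lemma pascal_sum:
  fixes F :: "nat \<Rightarrow> int"
  shows "(\<Sum>k=0..m. int (m choose k) * (F k + F (Suc k))) = (\<Sum>k=0..Suc m. int (Suc m choose k) * F k)"
proof -
  have "(\<Sum>k=0..Suc m. int (Suc m choose k) * F k) = F 0 + (\<Sum>k=0..m. int (Suc m choose Suc k) * F (Suc k))"
    by (subst sum.atLeast0_atMost_Suc_shift) simp
  also have "\<dots> = F 0 + (\<Sum>k=0..m. int (m choose k) * F (Suc k)) + (\<Sum>k=0..m. int (m choose Suc k) * F (Suc k))"
    by (simp add: sum.distrib algebra_simps)
  also have "(\<Sum>k=0..m. int (m choose Suc k) * F (Suc k)) = (\<Sum>k=0..Suc m. int (m choose k) * F k) - F 0"
    using sum.atLeast0_atMost_Suc_shift[of "\<lambda>k. int (m choose k) * F k" m] by simp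
  also have "(\<Sum>k=0..Suc m. int (m choose k) * F k) = (\<Sum>k=0..m. int (m choose k) * F k)"
    by simp
  finally show ?thesis by (simp add: sum.distrib algebra_simps)
qed

definition SP :: "nat \<Rightarrow> (nat \<Rightarrow> nat \<Rightarrow> nat \<Rightarrow> int) \<Rightarrow> int" where
  "SP n g = (\<Sum>p\<in>Pats n. g (cnt KL p) (cnt KR p) (cnt KO p))"

definition TR :: "nat \<Rightarrow> (nat \<Rightarrow> nat \<Rightarrow> nat \<Rightarrow> int) \<Rightarrow> int" where
  "TR n g = (\<Sum>c=0..n. int (n choose c) * (\<Sum>a=0..n-c. int ((n-c) choose a) * g a (n-c-a) c))"

lemma SP_Suc: "SP (Suc n) g = SP n (\<lambda>a b c. g (Suc a) b c) + SP n (\<lambda>a b c. g a (Suc b) c) + SP n (\<lambda>a b c. g a b (Suc c))"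
  by (simp add: SP_def sum_Pats_Suc cnt_def)

lemma tri: "SP n g = TR n g"
proof (induction n arbitrary: g)
  case 0
  then show ?case by (simp add: SP_def TR_def Pats_0 cnt_def)
next
  case (Suc n)
  define K where "K c = (\<Sum>a=0..Suc n - c. int ((Suc n - c) choose a) * g a (Suc n - c - a) c)" for c
  have first: "(\<Sum>a=0..n-c. int ((n-c) choose a) * (g (Suc a) (n-c-a) c + g a (Suc (n-c-a)) c)) = K c"
    if "c \<le> n" for c
  proof -
    define F where "F a = g a (Suc (n - c) - a) c" for a
    have "(\<Sum>a=0..n-c. int ((n-c) choose a) * (g (Suc a) (n-c-a) c + g a (Suc (n-c-a)) c))
        = (\<Sum>a=0..n-c. int ((n-c) choose a) * (F a + F (Suc a)))"
      by (intro sum.cong refl) (auto simp: F_def Suc_diff_le)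
    also have "\<dots> = (\<Sum>a=0..Suc (n-c). int (Suc (n-c) choose a) * F a)" by (rule pascal_sum)
    also have "\<dots> = K c" using that by (simp add: K_def F_def Suc_diff_le)
    finally show ?thesis .
  qed
  have second: "(\<Sum>a=0..n-c. int ((n-c) choose a) * g a (n-c-a) (Suc c)) = K (Suc c)" for c
    by (simp add: K_def)
  have "SP (Suc n) g = TR n (\<lambda>a b c. g (Suc a) b c) + TR n (\<lambda>a b c. g a (Suc b) c) + TR n (\<lambda>a b c. g a b (Suc c))"
    by (simp add: SP_Suc Suc.IH)
  also have "\<dots> = (\<Sum>c=0..n. int (n choose c) * (K c + K (Suc c)))"
  proof -
    have "TR n (\<lambda>a b c. g (Suc a) b c) + TR n (\<lambda>a b c. g a (Suc b) c) = (\<Sum>c=0..n. int (n choose c) * K c)"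
    proof -
      have "TR n (\<lambda>a b c. g (Suc a) b c) + TR n (\<lambda>a b c. g a (Suc b) c) =
        (\<Sum>c=0..n. int (n choose c) * (\<Sum>a=0..n-c. int ((n-c) choose a) * (g (Suc a) (n-c-a) c + g a (Suc (n-c-a)) c)))"
        unfolding TR_def by (simp only: sum.distrib[symmetric] distrib_left[symmetric])
      also have "\<dots> = (\<Sum>c=0..n. int (n choose c) * K c)"
      proof (rule sum.cong[OF refl])
        fix c assume "c \<in> {0..n}"
        then have "c \<le> n" by simp
        from first[OF this] show "int (n choose c) * (\<Sum>a=0..n-c. int ((n-c) choose a) * (g (Suc a) (n-c-a) c + g a (Suc (n-c-a)) c)) = int (n choose c) * K c"
          by simp
      qed
      finally show ?thesis .
    qed
    moreover have "TR n (\<lambda>a b c. g a b (Suc c)) = (\<Sum>c=0..n. int (n choose c) * K (Suc c))"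
      unfolding TR_def using second by simp
    ultimately show ?thesis by (simp add: sum.distrib distrib_left)
  qed
  also have "\<dots> = (\<Sum>c=0..Suc n. int (Suc n choose c) * K c)" by (rule pascal_sum)
  also have "\<dots> = TR (Suc n) g" by (simp add: TR_def K_def)
  finally show ?case .
qed

lemma inner:
  fixes x :: int
  shows "(\<Sum>a=0..m. int (m choose a) * x ^ max a (m - a)) =
    2 * ((x + 1) ^ m - (\<Sum>a=0..m div 2. int (m choose a) * x ^ a))
    + (if even m then int (m choose (m div 2)) * x ^ (m div 2) else 0)"
proof -
  define f where "f a = int (m choose a) * x ^ max a (m - a)" for a
  define h where "h a = int (m choose a) * x ^ a" for a
  define A where "A = {a\<in>{0..m}. 2 * a < m}"
  define B where "B = {a\<in>{0..m}. 2 * a = m}"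
  define C where "C = {a\<in>{0..m}. 2 * a > m}"
  have finA: "finite A" "finite B" "finite C" by (auto simp: A_def B_def C_def)
  have split: "{0..m} = A \<union> B \<union> C" by (auto simp: A_def B_def C_def)
  have d: "A \<inter> B = {}" "(A \<union> B) \<inter> C = {}" by (auto simp: A_def B_def C_def)
  have "sum f {0..m} = sum f A + sum f B + sum f C"
    unfolding split by (simp add: sum.union_disjoint finA d)
  moreover have "sum f C = sum h C"
    by (intro sum.cong refl) (auto simp: C_def f_def h_def max_def)
  moreover have "sum f A = sum h C"
  proof -
    have inj: "inj_on (\<lambda>a. m - a) C" by (auto simp: inj_on_def C_def)
    have img: "(\<lambda>a. m - a) ` C = A"
    proof (rule set_eqI, rule iffI)
      fix a assume "a \<in> (\<lambda>a. m - a) ` C" then show "a \<in> A" by (auto simp: A_def C_def)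
    next
      fix a assume a: "a \<in> A"
      then have "m - a \<in> C" "a = m - (m - a)" by (auto simp: A_def C_def)
      then show "a \<in> (\<lambda>a. m - a) ` C" by blast
    qed
    have "sum f A = sum (f \<circ> (\<lambda>a. m - a)) C" using sum.reindex[OF inj, of f] img by simp
    also have "\<dots> = sum h C"
    proof (rule sum.cong[OF refl])
      fix a assume "a \<in> C"
      then have a: "a \<le> m" "2 * a > m" by (auto simp: C_def)
      then have "m choose (m - a) = m choose a" using binomial_symmetric[of a m] by simp
      moreover have "m - a \<le> a" "m - (m - a) = a" using a by auto
      ultimately show "(f \<circ> (\<lambda>a. m - a)) a = h a" by (simp add: f_def h_def max_def)
    qed
    finally show ?thesis .
  qed
  moreover have "sum f B = (if even m then int (m choose (m div 2)) * x ^ (m div 2) else 0)"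
  proof (cases "even m")
    case True
    then have "B = {m div 2}" by (auto simp: B_def)
    moreover have "m - m div 2 = m div 2" using True by presburger
    ultimately show ?thesis using True by (simp add: f_def)
  next
    case False
    then have "B = {}" by (auto simp: B_def)
    then show ?thesis using False by simp
  qed
  moreover have "sum h C = (x + 1) ^ m - (\<Sum>a=0..m div 2. h a)"
  proof -
    have s2: "{0..m} = {0..m div 2} \<union> C" "{0..m div 2} \<inter> C = {}" by (auto simp: C_def)
    have "(x + 1) ^ m = sum h {0..m}"
      using binomial_ring[of x 1 m] by (simp add: h_def atLeast0AtMost mult.commute)
    also have "\<dots> = sum h {0..m div 2} + sum h C"
      unfolding s2(1) by (rule sum.union_disjoint) (auto simp: C_def)
    finally show ?thesis by simp
  qed
  ultimately show ?thesis by (simp add: f_def h_def)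
qed

lemma parity_split:
  fixes h :: "nat \<Rightarrow> int"
  shows "(\<Sum>c=0..n. h c) = (\<Sum>i=0..n div 2. h (2 * i)) + (\<Sum>i<(n + 1) div 2. h (2 * i + 1))"
proof (induction n)
  case 0
  then show ?case by simp
next
  case (Suc n)
  show ?case
  proof (cases "even n")
    case True
    then have e1: "Suc n div 2 = n div 2" "(Suc n + 1) div 2 = Suc ((n + 1) div 2)" "(n+1) div 2 = n div 2"
      by presburger+
    have "2 * ((n + 1) div 2) + 1 = Suc n" using True by presburger
    then show ?thesis using Suc by (simp add: e1)
  next
    case False
    then have e1: "Suc n div 2 = Suc (n div 2)" "(Suc n + 1) div 2 = (n + 1) div 2"
      by presburger+
    have "2 * Suc (n div 2) = Suc n" using False by presburger
    then show ?thesis using Suc by (simp add: e1)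
  qed
qed

lemma reindex_B:
  fixes F :: "nat \<Rightarrow> int"
  shows "(\<Sum>c=0..n. if even (n - c) then F c else 0) = (\<Sum>i=0..n div 2. F (n - 2 * i))"
proof -
  have inj: "inj_on (\<lambda>i. n - 2 * i) {0..n div 2}" by (auto simp: inj_on_def)
  have img: "(\<lambda>i. n - 2 * i) ` {0..n div 2} = {c\<in>{0..n}. even (n - c)}"
  proof (rule set_eqI, rule iffI)
    fix c assume "c \<in> (\<lambda>i. n - 2 * i) ` {0..n div 2}"
    then obtain i where "i \<le> n div 2" "c = n - 2 * i" by auto
    then show "c \<in> {c\<in>{0..n}. even (n - c)}" by auto
  next
    fix c assume c: "c \<in> {c\<in>{0..n}. even (n - c)}"
    then have "c = n - 2 * ((n - c) div 2)" "(n - c) div 2 \<in> {0..n div 2}" by auto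
    then show "c \<in> (\<lambda>i. n - 2 * i) ` {0..n div 2}" by blast
  qed
  have "(\<Sum>c=0..n. if even (n - c) then F c else 0) = (\<Sum>c\<in>{c\<in>{0..n}. even (n - c)}. F c)"
    by (rule sym, rule sum.inter_filter) simp
  also have "\<dots> = (\<Sum>i=0..n div 2. F (n - 2 * i))"
    unfolding img[symmetric] by (simp add: sum.reindex[OF inj])
  finally show ?thesis .
qed

lemma main_sum:
  fixes x y :: int
  defines "Q m \<equiv> (\<Sum>a=0..m div 2. int (m choose a) * x ^ a)"
      and "R m \<equiv> (if even m then int (m choose (m div 2)) * x ^ (m div 2) else 0)"
  shows "TR n (\<lambda>a b c. x ^ max a b * y ^ c) =
     2 * ((x + y + 1) ^ n - (\<Sum>c=0..n. int (n choose c) * y ^ c * Q (n - c)))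
     + (\<Sum>c=0..n. int (n choose c) * y ^ c * R (n - c))"
proof -
  have "TR n (\<lambda>a b c. x ^ max a b * y ^ c) =
     (\<Sum>c=0..n. int (n choose c) * y ^ c * (\<Sum>a=0..n-c. int ((n-c) choose a) * x ^ max a (n - c - a)))"
    unfolding TR_def
    by (intro sum.cong refl) (simp add: sum_distrib_left algebra_simps)
  also have "\<dots> = (\<Sum>c=0..n. int (n choose c) * y ^ c * (2 * ((x + 1) ^ (n - c) - Q (n - c)) + R (n - c)))"
    by (simp only: inner Q_def R_def)
  also have "\<dots> = 2 * ((\<Sum>c=0..n. int (n choose c) * y ^ c * (x + 1) ^ (n - c))
        - (\<Sum>c=0..n. int (n choose c) * y ^ c * Q (n - c))) + (\<Sum>c=0..n. int (n choose c) * y ^ c * R (n - c))"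
    by (simp add: sum.distrib sum_subtractf sum_distrib_left algebra_simps)
  also have "(\<Sum>c=0..n. int (n choose c) * y ^ c * (x + 1) ^ (n - c)) = (x + y + 1) ^ n"
    using binomial_ring[of y "x + 1" n] by (simp add: atLeast0AtMost algebra_simps)
  finally show ?thesis .
qed

lemma T2_even:
  fixes x y :: int
  assumes "even n"
  shows "(\<Sum>c=0..n. int (n choose c) * y ^ c * (\<Sum>a=0..(n - c) div 2. int ((n - c) choose a) * x ^ a)) =
    (\<Sum>i=0..n div 2. int (n choose (2*i)) * y ^ (2*i) *
               (\<Sum>j=0..n div 2 - i. int (n - 2*i choose j) * x ^ j))
  + (\<Sum>i=0..<n div 2. int (n choose (2*i+1)) * y ^ (2*i+1) *
               (\<Sum>j=0..<n div 2 - i. int (n - 2*i - 1 choose j) * x ^ j))"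
proof -
  have "(n + 1) div 2 = n div 2" using assms by presburger
  then have "(\<Sum>c=0..n. int (n choose c) * y ^ c * (\<Sum>a=0..(n - c) div 2. int ((n - c) choose a) * x ^ a)) =
    (\<Sum>i=0..n div 2. int (n choose (2*i)) * y ^ (2*i) * (\<Sum>a=0..(n - 2*i) div 2. int ((n - 2*i) choose a) * x ^ a))
    + (\<Sum>i<n div 2. int (n choose (2*i+1)) * y ^ (2*i+1) * (\<Sum>a=0..(n - (2*i+1)) div 2. int ((n - (2*i+1)) choose a) * x ^ a))"
    using parity_split[of "\<lambda>c. int (n choose c) * y ^ c * (\<Sum>a=0..(n - c) div 2. int ((n - c) choose a) * x ^ a)" n]
    by simp
  also have "(\<Sum>i=0..n div 2. int (n choose (2*i)) * y ^ (2*i) * (\<Sum>a=0..(n - 2*i) div 2. int ((n - 2*i) choose a) * x ^ a))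
     = (\<Sum>i=0..n div 2. int (n choose (2*i)) * y ^ (2*i) * (\<Sum>j=0..n div 2 - i. int (n - 2*i choose j) * x ^ j))"
  proof (rule sum.cong[OF refl])
    fix i assume "i \<in> {0..n div 2}"
    have "(n - 2*i) div 2 = n div 2 - i" by presburger
    then show "int (n choose (2*i)) * y ^ (2*i) * (\<Sum>a=0..(n - 2*i) div 2. int ((n - 2*i) choose a) * x ^ a)
      = int (n choose (2*i)) * y ^ (2*i) * (\<Sum>j=0..n div 2 - i. int (n - 2*i choose j) * x ^ j)" by simp
  qed
  also have "(\<Sum>i<n div 2. int (n choose (2*i+1)) * y ^ (2*i+1) * (\<Sum>a=0..(n - (2*i+1)) div 2. int ((n - (2*i+1)) choose a) * x ^ a))
     = (\<Sum>i=0..<n div 2. int (n choose (2*i+1)) * y ^ (2*i+1) * (\<Sum>j=0..<n div 2 - i. int (n - 2*i - 1 choose j) * x ^ j))"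
  proof (rule sum.cong)
    show "{..<n div 2} = {0..<n div 2}" by auto
  next
    fix i assume "i \<in> {0..<n div 2}"
    then have i: "i < n div 2" by simp
    have "{0..(n - (2*i+1)) div 2} = {0..<n div 2 - i}"
    proof -
      have "(n - (2*i+1)) div 2 = n div 2 - i - 1" using assms i by presburger
      moreover have "n div 2 - i = Suc (n div 2 - i - 1)" using i by simp
      ultimately show ?thesis by (simp add: atLeastLessThanSuc_atLeastAtMost)
    qed
    then show "int (n choose (2*i+1)) * y ^ (2*i+1) * (\<Sum>a=0..(n - (2*i+1)) div 2. int ((n - (2*i+1)) choose a) * x ^ a)
      = int (n choose (2*i+1)) * y ^ (2*i+1) * (\<Sum>j=0..<n div 2 - i. int (n - 2*i - 1 choose j) * x ^ j)"
      by simp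
  qed
  finally show ?thesis .
qed

lemma T2_odd:
  fixes x y :: int
  assumes "odd n"
  shows "(\<Sum>c=0..n. int (n choose c) * y ^ c * (\<Sum>a=0..(n - c) div 2. int ((n - c) choose a) * x ^ a)) =
    (\<Sum>i=0..n div 2. int (n choose (2*i)) * y ^ (2*i) *
               (\<Sum>j=0..(n - 1) div 2 - i. int (n - 2*i choose j) * x ^ j))
  + (\<Sum>i=0..(n - 1) div 2. int (n choose (2*i+1)) * y ^ (2*i+1) *
               (\<Sum>j=0..(n - 1) div 2 - i. int (n - 2*i - 1 choose j) * x ^ j))"
proof -
  have "(n + 1) div 2 = Suc ((n - 1) div 2)" using assms by presburger
  then have "(\<Sum>c=0..n. int (n choose c) * y ^ c * (\<Sum>a=0..(n - c) div 2. int ((n - c) choose a) * x ^ a)) =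
    (\<Sum>i=0..n div 2. int (n choose (2*i)) * y ^ (2*i) * (\<Sum>a=0..(n - 2*i) div 2. int ((n - 2*i) choose a) * x ^ a))
    + (\<Sum>i=0..(n - 1) div 2. int (n choose (2*i+1)) * y ^ (2*i+1) * (\<Sum>a=0..(n - (2*i+1)) div 2. int ((n - (2*i+1)) choose a) * x ^ a))"
    using parity_split[of "\<lambda>c. int (n choose c) * y ^ c * (\<Sum>a=0..(n - c) div 2. int ((n - c) choose a) * x ^ a)" n]
    by (simp add: lessThan_Suc_atMost atLeast0AtMost)
  also have "(\<Sum>i=0..n div 2. int (n choose (2*i)) * y ^ (2*i) * (\<Sum>a=0..(n - 2*i) div 2. int ((n - 2*i) choose a) * x ^ a))
     = (\<Sum>i=0..n div 2. int (n choose (2*i)) * y ^ (2*i) * (\<Sum>j=0..(n - 1) div 2 - i. int (n - 2*i choose j) * x ^ j))"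
  proof (rule sum.cong[OF refl])
    fix i assume "i \<in> {0..n div 2}"
    have "(n - 2*i) div 2 = (n - 1) div 2 - i" using assms by presburger
    then show "int (n choose (2*i)) * y ^ (2*i) * (\<Sum>a=0..(n - 2*i) div 2. int ((n - 2*i) choose a) * x ^ a)
      = int (n choose (2*i)) * y ^ (2*i) * (\<Sum>j=0..(n - 1) div 2 - i. int (n - 2*i choose j) * x ^ j)" by simp
  qed
  also have "(\<Sum>i=0..(n - 1) div 2. int (n choose (2*i+1)) * y ^ (2*i+1) * (\<Sum>a=0..(n - (2*i+1)) div 2. int ((n - (2*i+1)) choose a) * x ^ a))
     = (\<Sum>i=0..(n - 1) div 2. int (n choose (2*i+1)) * y ^ (2*i+1) * (\<Sum>j=0..(n - 1) div 2 - i. int (n - 2*i - 1 choose j) * x ^ j))"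
  proof (rule sum.cong[OF refl])
    fix i assume "i \<in> {0..(n - 1) div 2}"
    have "(n - (2*i+1)) div 2 = (n - 1) div 2 - i" by presburger
    then show "int (n choose (2*i+1)) * y ^ (2*i+1) * (\<Sum>a=0..(n - (2*i+1)) div 2. int ((n - (2*i+1)) choose a) * x ^ a)
      = int (n choose (2*i+1)) * y ^ (2*i+1) * (\<Sum>j=0..(n - 1) div 2 - i. int (n - 2*i - 1 choose j) * x ^ j)"
      by simp
  qed
  finally show ?thesis .
qed

lemma T3:
  fixes x y :: int
  shows "(\<Sum>c=0..n. int (n choose c) * y ^ c * (if even (n - c) then int ((n - c) choose ((n - c) div 2)) * x ^ ((n - c) div 2) else 0))
    = (\<Sum>i=0..n div 2. int (n choose (n - 2*i)) * int (2*i choose i) * x ^ i * y ^ (n - 2*i))"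
proof -
  have "(\<Sum>c=0..n. int (n choose c) * y ^ c * (if even (n - c) then int ((n - c) choose ((n - c) div 2)) * x ^ ((n - c) div 2) else 0))
    = (\<Sum>c=0..n. if even (n - c) then int (n choose c) * y ^ c * (int ((n - c) choose ((n - c) div 2)) * x ^ ((n - c) div 2)) else 0)"
    by (intro sum.cong refl) simp
  also have "\<dots> = (\<Sum>i=0..n div 2. int (n choose (n - 2*i)) * y ^ (n - 2*i) * (int ((n - (n - 2*i)) choose ((n - (n - 2*i)) div 2)) * x ^ ((n - (n - 2*i)) div 2)))"
    by (rule reindex_B)
  also have "\<dots> = (\<Sum>i=0..n div 2. int (n choose (n - 2*i)) * int (2*i choose i) * x ^ i * y ^ (n - 2*i))"
  proof (rule sum.cong[OF refl])
    fix i assume "i \<in> {0..n div 2}"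
    then have "n - (n - 2*i) = 2 * i" by auto
    then show "int (n choose (n - 2*i)) * y ^ (n - 2*i) * (int ((n - (n - 2*i)) choose ((n - (n - 2*i)) div 2)) * x ^ ((n - (n - 2*i)) div 2))
      = int (n choose (n - 2*i)) * int (2*i choose i) * x ^ i * y ^ (n - 2*i)" by (simp add: algebra_simps)
  qed
  finally show ?thesis .
qed

theorem proposition2p3:
  fixes M N n :: nat
  assumes "n \<ge> 1"
  shows "int (periodic_points M N n) =
    (if even n then
       2 * ((int M + int N + 1) ^ n
          - (\<Sum>i=0..n div 2. int (n choose (2*i)) * int N ^ (2*i) *
               (\<Sum>j=0..n div 2 - i. int (n - 2*i choose j) * int M ^ j))
          - (\<Sum>i=0..<n div 2. int (n choose (2*i+1)) * int N ^ (2*i+1) *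
               (\<Sum>j=0..<n div 2 - i. int (n - 2*i - 1 choose j) * int M ^ j)))
       + (\<Sum>i=0..n div 2. int (n choose (n - 2*i)) * int (2*i choose i) * int M ^ i * int N ^ (n - 2*i))
     else
       2 * ((int M + int N + 1) ^ n
          - (\<Sum>i=0..n div 2. int (n choose (2*i)) * int N ^ (2*i) *
               (\<Sum>j=0..(n - 1) div 2 - i. int (n - 2*i choose j) * int M ^ j))
          - (\<Sum>i=0..(n - 1) div 2. int (n choose (2*i+1)) * int N ^ (2*i+1) *
               (\<Sum>j=0..(n - 1) div 2 - i. int (n - 2*i - 1 choose j) * int M ^ j)))
       + (\<Sum>i=0..(n - 1) div 2. int (n choose (n - 2*i)) * int N ^ (n - 2*i) * int (2*i choose i) * int M ^ i))"
proof -
  define x where "x = int M"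
  define y where "y = int N"
  have "int (periodic_points M N n) = int (\<Sum>p\<in>Pats n. wt M N p)"
    using card_periodic[OF assms] card_Wn by simp
  also have "\<dots> = SP n (\<lambda>a b c. x ^ max a b * y ^ c)"
    by (simp add: SP_def wt_def x_def y_def)
  also have "\<dots> = TR n (\<lambda>a b c. x ^ max a b * y ^ c)" by (rule tri)
  also have "\<dots> = 2 * ((x + y + 1) ^ n - (\<Sum>c=0..n. int (n choose c) * y ^ c * (\<Sum>a=0..(n - c) div 2. int ((n - c) choose a) * x ^ a)))
     + (\<Sum>c=0..n. int (n choose c) * y ^ c * (if even (n - c) then int ((n - c) choose ((n - c) div 2)) * x ^ ((n - c) div 2) else 0))"
    by (rule main_sum)
  also have "\<dots> = 2 * ((x + y + 1) ^ n - (\<Sum>c=0..n. int (n choose c) * y ^ c * (\<Sum>a=0..(n - c) div 2. int ((n - c) choose a) * x ^ a)))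
     + (\<Sum>i=0..n div 2. int (n choose (n - 2*i)) * int (2*i choose i) * x ^ i * y ^ (n - 2*i))"
    by (simp only: T3)
  finally have main: "int (periodic_points M N n) = \<dots>" .
  show ?thesis
  proof (cases "even n")
    case True
    show ?thesis using main T2_even[OF True, of y x] True by (simp add: x_def y_def)
  next
    case False
    have "(n - 1) div 2 = n div 2" using False by presburger
    moreover have "(\<Sum>i=0..n div 2. int (n choose (n - 2*i)) * int (2*i choose i) * x ^ i * y ^ (n - 2*i))
      = (\<Sum>i=0..n div 2. int (n choose (n - 2*i)) * y ^ (n - 2*i) * int (2*i choose i) * x ^ i)"
      by (simp add: algebra_simps)
    ultimately show ?thesis using main T2_odd[OF False, of y x] False by (simp add: x_def y_def)
  qed
qed

end
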